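(* For every integer $T=6k+3$ with $k\ge 1$ and every $\sigma\in\mathfrak S_3$, the vector $\sigma c$ with $c=[5k+2,\,2k+1,\,-4k-1,\,-k,\,-k,\,2k+1]$ defines a facet of $P^T$.
   Context: For an integer $T\ge 2$, let $\Omega_T$ be the set of words $w=s_1s_2\cdots s_T$ over $\{1,2,3\}$ with $s_l\neq s_{l+1}$ for $l=1,\dots,T-1$. For $w\in\Omega_T$ and an ordered pair $ij$, $i\neq j$, let $x_{ij}(w)$ be the number of indices $1\le l\le T-1$ with $s_ls_{l+1}=ij$. Vectors of $\mathbb R^6$ are indexed in the order $[x_{12},x_{13},x_{21},x_{23},x_{31},x_{32}]$. Let $a_w=[x_{12}(w),\dots,x_{32}(w)]$ and $P^T=\mathrm{conv}\{a_w:w\in\Omega_T\}$. $\mathfrak S_3$ acts on $\mathbb R^6$ by $(\sigma c)_{ij}=c_{\sigma(i)\sigma(j)}$. A vector $c$ defines a facet of $P^T$ if $c\cdot a_w\ge0$ for all $w\in\Omega_T$ and $\{x\in P^T: c\cdot x=0\}$ is a facet of $P^T$. *)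

theory Defs
  imports "HOL-Analysis.Analysis"
begin

definition Omega :: "nat \<Rightarrow> nat list set" where
  "Omega T = {w. length w = T \<and> set w \<subseteq> {1,2,3} \<and>
                 (\<forall>l. Suc l < T \<longrightarrow> w ! l \<noteq> w ! Suc l)}"

definition xcount :: "nat \<Rightarrow> nat \<Rightarrow> nat list \<Rightarrow> nat" where
  "xcount i j w = card {l. Suc l < length w \<and> w ! l = i \<and> w ! Suc l = j}"

definition vec6 :: "(nat \<Rightarrow> nat \<Rightarrow> real) \<Rightarrow> real ^ 6" where
  "vec6 f = vector [f 1 2, f 1 3, f 2 1, f 2 3, f 3 1, f 3 2]"

definition avec :: "nat list \<Rightarrow> real ^ 6" where
  "avec w = vec6 (\<lambda>i j. real (xcount i j w))"

definition PT :: "nat \<Rightarrow> (real ^ 6) set" where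
  "PT T = convex hull (avec ` Omega T)"

definition act :: "(nat \<Rightarrow> nat) \<Rightarrow> (nat \<Rightarrow> nat \<Rightarrow> real) \<Rightarrow> real ^ 6" where
  "act \<sigma> c = vec6 (\<lambda>i j. c (\<sigma> i) (\<sigma> j))"

definition defines_facet :: "nat \<Rightarrow> real ^ 6 \<Rightarrow> bool" where
  "defines_facet T c \<longleftrightarrow> (\<forall>w \<in> Omega T. c \<bullet> avec w \<ge> 0) \<and>
      {x \<in> PT T. c \<bullet> x = 0} facet_of PT T"

definition cfun :: "nat \<Rightarrow> nat \<Rightarrow> nat \<Rightarrow> real" where
  "cfun k i j =
     (if (i,j) = (1,2) then 5 * real k + 2
      else if (i,j) = (1,3) then 2 * real k + 1
      else if (i,j) = (2,1) then - 4 * real k - 1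
      else if (i,j) = (2,3) then - real k
      else if (i,j) = (3,1) then - real k
      else if (i,j) = (3,2) then 2 * real k + 1
      else 0)"

end

theory Submission
  imports Defs
begin


lemma exhaust_6:
  fixes x :: 6
  shows "x = 1 \<or> x = 2 \<or> x = 3 \<or> x = 4 \<or> x = 5 \<or> x = 6"
proof (induct x)
  case (of_int z)
  then have "z = 0 \<or> z = 1 \<or> z = 2 \<or> z = 3 \<or> z = 4 \<or> z = 5" by fastforce
  then show ?case by auto
qed

lemma forall_6: "(\<forall>i::6. P i) \<longleftrightarrow> P 1 \<and> P 2 \<and> P 3 \<and> P 4 \<and> P 5 \<and> P 6"
  by (metis exhaust_6)

lemma UNIV_6: "UNIV = {1, 2, 3, 4, 5, 6::6}"
  using exhaust_6 by auto

lemma sum_6: "sum g (UNIV::6 set) = g 1 + g 2 + g 3 + g 4 + g 5 + g 6"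
  unfolding UNIV_6 by (simp add: ac_simps)

lemma vector_6 [simp]:
 "(vector [a,b,c,d,e,f] ::('a::zero)^6)$1 = a"
 "(vector [a,b,c,d,e,f] ::('a::zero)^6)$2 = b"
 "(vector [a,b,c,d,e,f] ::('a::zero)^6)$3 = c"
 "(vector [a,b,c,d,e,f] ::('a::zero)^6)$4 = d"
 "(vector [a,b,c,d,e,f] ::('a::zero)^6)$5 = e"
 "(vector [a,b,c,d,e,f] ::('a::zero)^6)$6 = f"
  unfolding vector_def by simp_all

lemma vec6_inner: "vec6 f \<bullet> vec6 g = f 1 2 * g 1 2 + f 1 3 * g 1 3 + f 2 1 * g 2 1
   + f 2 3 * g 2 3 + f 3 1 * g 3 1 + f 3 2 * g 3 2"
  unfolding vec6_def inner_vec_def sum_6 by simp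

lemma vec6_eq: "vec6 f = vec6 g \<longleftrightarrow> f 1 2 = g 1 2 \<and> f 1 3 = g 1 3 \<and> f 2 1 = g 2 1
   \<and> f 2 3 = g 2 3 \<and> f 3 1 = g 3 1 \<and> f 3 2 = g 3 2"
  unfolding vec6_def vec_eq_iff forall_6 by simp

lemma vec6_diff: "vec6 f - vec6 g = vec6 (\<lambda>i j. f i j - g i j)"
  unfolding vec6_def vec_eq_iff forall_6 by simp

lemma vec6_add: "vec6 f + vec6 g = vec6 (\<lambda>i j. f i j + g i j)"
  unfolding vec6_def vec_eq_iff forall_6 by simp

lemma vec6_scale: "a *\<^sub>R vec6 f = vec6 (\<lambda>i j. a * f i j)"
  unfolding vec6_def vec_eq_iff forall_6 by simp

lemma vec6_zero: "(0::real^6) = vec6 (\<lambda>i j. 0)"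
  unfolding vec6_def vec_eq_iff forall_6 by simp


fun xc :: "nat \<Rightarrow> nat \<Rightarrow> nat list \<Rightarrow> nat" where
  "xc i j (a # b # w) = (if a = i \<and> b = j then 1 else 0) + xc i j (b # w)"
| "xc i j _ = 0"

fun adj :: "nat list \<Rightarrow> bool" where
  "adj (a # b # w) = (a \<noteq> b \<and> adj (b # w))"
| "adj _ = True"

lemma xcount_eq: "xcount i j w = xc i j w"
proof (induction i j w rule: xc.induct)
  case (1 i j a b w)
  let ?A = "{l. Suc l < length (b # w) \<and> (b # w) ! l = i \<and> (b # w) ! Suc l = j}"
  have eq: "{l. Suc l < length (a # b # w) \<and> (a # b # w) ! l = i \<and> (a # b # w) ! Suc l = j}
     = (if a = i \<and> b = j then {0} else {}) \<union> Suc ` ?A"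
  proof (rule set_eqI)
    fix l show "l \<in> {l. Suc l < length (a # b # w) \<and> (a # b # w) ! l = i \<and> (a # b # w) ! Suc l = j}
       \<longleftrightarrow> l \<in> (if a = i \<and> b = j then {0} else {}) \<union> Suc ` ?A"
      by (cases l) auto
  qed
  have fin: "finite ?A" by (rule finite_subset[of _ "{..<length (b#w)}"]) auto
  have "card ((if a = i \<and> b = j then {0} else {}) \<union> Suc ` ?A)
      = card (if a = i \<and> b = j then {0::nat} else {}) + card (Suc ` ?A)"
    by (rule card_Un_disjoint) (use fin in auto)
  also have "card (Suc ` ?A) = card ?A" by (simp add: card_image)
  finally show ?case using 1 unfolding xcount_def eq by simp
next
  case ("2_1" i j) then show ?case by (simp add: xcount_def)
next
  case ("2_2" i j v) then show ?case by (simp add: xcount_def)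
qed

lemma adj_iff: "(\<forall>l. Suc l < length w \<longrightarrow> w ! l \<noteq> w ! Suc l) \<longleftrightarrow> adj w"
proof (induction w rule: adj.induct)
  case (1 a b w)
  have "(\<forall>l. Suc l < length (a#b#w) \<longrightarrow> (a#b#w) ! l \<noteq> (a#b#w) ! Suc l)
     \<longleftrightarrow> a \<noteq> b \<and> (\<forall>l. Suc l < length (b#w) \<longrightarrow> (b#w) ! l \<noteq> (b#w) ! Suc l)"
  proof
    assume H: "\<forall>l. Suc l < length (a#b#w) \<longrightarrow> (a#b#w) ! l \<noteq> (a#b#w) ! Suc l"
    show "a \<noteq> b \<and> (\<forall>l. Suc l < length (b#w) \<longrightarrow> (b#w) ! l \<noteq> (b#w) ! Suc l)"
    proof
      show "a \<noteq> b" using H[rule_format, of 0] by simp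
      show "\<forall>l. Suc l < length (b#w) \<longrightarrow> (b#w) ! l \<noteq> (b#w) ! Suc l"
        using H by (metis Suc_less_eq length_Cons nth_Cons_Suc)
    qed
  next
    assume H: "a \<noteq> b \<and> (\<forall>l. Suc l < length (b#w) \<longrightarrow> (b#w) ! l \<noteq> (b#w) ! Suc l)"
    show "\<forall>l. Suc l < length (a#b#w) \<longrightarrow> (a#b#w) ! l \<noteq> (a#b#w) ! Suc l"
    proof (intro allI impI)
      fix l assume "Suc l < length (a#b#w)"
      then show "(a#b#w) ! l \<noteq> (a#b#w) ! Suc l"
        using H by (cases l) auto
    qed
  qed
  then show ?case using 1 by simp
qed auto

lemma Omega_iff: "w \<in> Omega T \<longleftrightarrow> length w = T \<and> set w \<subseteq> {1,2,3} \<and> adj w"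
  unfolding Omega_def using adj_iff[of w] by auto

lemma xc_append: "xc i j (u @ v) = xc i j u + xc i j v +
   (if u \<noteq> [] \<and> v \<noteq> [] \<and> last u = i \<and> hd v = j then 1 else 0)"
proof (induction i j u rule: xc.induct)
  case (1 i j a b w) then show ?case by simp
next
  case ("2_1" i j) then show ?case by simp
next
  case ("2_2" i j a) then show ?case by (cases v) auto
qed

lemma adj_append: "adj (u @ v) \<longleftrightarrow> adj u \<and> adj v \<and> (u \<noteq> [] \<and> v \<noteq> [] \<longrightarrow> last u \<noteq> hd v)"
proof (induction u rule: adj.induct)
  case (1 a b w) then show ?case by simp
next
  case "2_1" then show ?case by simp
next
  case ("2_2" a) then show ?case by (cases v) auto
qed

lemma xc_map: assumes "inj f" shows "xc (f i) (f j) (map f w) = xc i j w"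
  by (induction i j w rule: xc.induct) (use assms in \<open>auto dest: injD\<close>)

lemma adj_map: assumes "inj f" shows "adj (map f w) = adj w"
  by (induction w rule: adj.induct) (use assms in \<open>auto dest: injD\<close>)


lemma xc_snoc: "xs \<noteq> [] \<Longrightarrow> xc i j (xs @ [x]) = xc i j xs + (if last xs = i \<and> x = j then 1 else 0)"
  by (simp add: xc_append)

lemma invariants:
  assumes "w \<noteq> []" "set w \<subseteq> {1,2,3}" "adj w"
  shows "xc 1 2 w + xc 1 3 w + xc 2 1 w + xc 2 3 w + xc 3 1 w + xc 3 2 w + 1 = length w
   \<and> xc 1 2 w + xc 1 3 w + (if last w = 1 then 1 else 0) = xc 2 1 w + xc 3 1 w + (if hd w = 1 then 1 else 0)
   \<and> xc 3 1 w + xc 3 2 w + (if last w = 3 then 1 else 0) = xc 1 3 w + xc 2 3 w + (if hd w = 3 then 1 else 0)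
   \<and> length w \<le> 3*(xc 1 2 w + xc 3 1 w + xc 3 2 w) + (if last w = 1 then 1 else if last w = 3 then 2 else 0) + 1"
  using assms
proof (induction w rule: rev_induct)
  case Nil then show ?case by simp
next
  case (snoc x xs)
  show ?case
  proof (cases "xs = []")
    case True then show ?thesis using snoc by auto
  next
    case False
    have a: "adj xs" and ne: "last xs \<noteq> x" using snoc.prems(3) False by (auto simp: adj_append)
    have s: "set xs \<subseteq> {1,2,3}" "x \<in> {1,2,3}" using snoc.prems(2) by auto
    have l: "last xs \<in> {1,2,3}" using s False last_in_set by blast
    note IH = snoc.IH[OF False s(1) a]
    have hd: "hd (xs @ [x]) = hd xs" using False by simp
    show ?thesis unfolding xc_snoc[OF False] hd using IH ne l s(2)
      by (auto split: if_splits)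
  qed
qed


definition cval :: "nat \<Rightarrow> nat list \<Rightarrow> real" where
  "cval k w = (5 * real k + 2) * xc 1 2 w + (2 * real k + 1) * xc 1 3 w
     + (- 4 * real k - 1) * xc 2 1 w + (- real k) * xc 2 3 w + (- real k) * xc 3 1 w
     + (2 * real k + 1) * xc 3 2 w"

lemma cval_nonneg:
  assumes "w \<in> Omega (6 * k + 3)"
  shows "cval k w \<ge> 0"
proof -
  have L: "length w = 6*k+3" "set w \<subseteq> {1,2,3}" "adj w" using assms by (auto simp: Omega_iff)
  then have ne: "w \<noteq> []" by auto
  note I = invariants[OF ne L(2) L(3)]
  define a where "a = xc 1 2 w"
  define b where "b = xc 1 3 w"
  define d where "d = xc 2 1 w"
  define e where "e = xc 2 3 w"
  define f where "f = xc 3 1 w"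
  define g where "g = xc 3 2 w"
  define h1 :: nat where "h1 = (if hd w = 1 then 1 else 0)"
  define l1 :: nat where "l1 = (if last w = 1 then 1 else 0)"
  define h3 :: nat where "h3 = (if hd w = 3 then 1 else 0)"
  define l3 :: nat where "l3 = (if last w = 3 then 1 else 0)"
  have S: "a+b+d+e+f+g = 6*k+2" using I L(1) unfolding a_def b_def d_def e_def f_def g_def by linarith
  have F1: "a+b+l1 = d+f+h1" using I unfolding a_def b_def d_def f_def h1_def l1_def by linarith
  have F3: "f+g+l3 = b+e+h3" using I unfolding b_def e_def f_def g_def h3_def l3_def by linarith
  have M: "a+f+g+h1 \<ge> 2*k + l1"
  proof -
    have "6*k+3 \<le> 3*(a+f+g) + (if last w = 1 then 1 else if last w = 3 then 2 else 0) + 1"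
      using I L(1) unfolding a_def f_def g_def by linarith
    then show ?thesis unfolding l1_def by (auto split: if_splits)
  qed
  have S': "real a + b + d + e + f + g = 6*real k + 2" using S by (metis of_nat_add of_nat_mult of_nat_numeral)
  have F1': "real a + b + l1 = real d + f + h1" using F1 by (metis of_nat_add)
  have F3': "real f + g + l3 = real b + e + h3" using F3 by (metis of_nat_add)
  have M': "real a + f + g + h1 - l1 - 2 * real k \<ge> 0" using M by linarith
  have dd: "real d = real a + b + l1 - f - h1" using F1' by linarith
  have ee: "real e = real f + g + l3 - b - h3" using F3' by linarith
  have bb: "real b = 6*real k + 2 - 2*real a - f - 2*real g + h1 - l1 + h3 - l3"
    using S' dd ee by linarith
  have "cval k w = (3*real k + 1) * (real a + f + g + h1 - l1 - 2 * real k)"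
    unfolding cval_def a_def[symmetric] b_def[symmetric] d_def[symmetric] e_def[symmetric]
      f_def[symmetric] g_def[symmetric] dd ee bb
    by (simp add: algebra_simps)
  also have "\<dots> \<ge> 0" using M' by simp
  finally show ?thesis .
qed


fun R :: "nat \<Rightarrow> nat list" where
  "R 0 = []"
| "R (Suc n) = [3,2,1] @ R n"

lemma R_len [simp]: "length (R n) = 3 * n" by (induction n) auto
lemma R_set: "set (R n) \<subseteq> {1,2,3}" by (induction n) auto
lemma R_hd [simp]: "hd (R (Suc n)) = 3" by simp
lemma R_last [simp]: "last (R (Suc n)) = 1" by (induction n) auto
lemma R_ne [simp]: "R (Suc n) \<noteq> []" by simp
lemma R_adj [simp]: "adj (R n)"
  by (induction n) (auto simp: adj_append, case_tac n, auto)
lemma R_xc: "xc i j (R (Suc n)) = (Suc n) * ((if i = 3 \<and> j = 2 then 1 else 0) + (if i = 2 \<and> j = 1 then 1 else 0))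
    + n * (if i = 1 \<and> j = 3 then 1 else 0)"
proof (induction n)
  case 0 then show ?case by simp
next
  case (Suc n)
  have "R (Suc (Suc n)) = [3,2,1] @ R (Suc n)" by simp
  then show ?case using Suc by (simp only: xc_append) (auto simp: algebra_simps)
qed



lemma avec_xc: "avec w = vec6 (\<lambda>i j. real (xc i j w))"
  by (simp add: avec_def xcount_eq)

lemma xc_Cons_R: "xc i j (a # R (Suc n)) = (if a = i \<and> 3 = j then 1 else 0) + xc i j (R (Suc n))"
  using xc_append[of i j "[a]" "R (Suc n)"] by simp

lemma xc_R3: "xc i j (R (Suc n) @ [3]) = xc i j (R (Suc n)) + (if 1 = i \<and> 3 = j then 1 else 0)"
  by (simp add: xc_snoc del: R.simps)

lemma adj_R3: "adj (R (Suc n) @ [3])"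
  by (simp add: adj_append del: R.simps)

lemma adj_Cons_R: "adj (a # R (Suc n)) \<longleftrightarrow> a \<noteq> 3"
  using adj_append[of "[a]" "R (Suc n)"] by (simp del: R.simps)

lemma xc_Cons_R3: "xc i j (a # (R (Suc n) @ [3])) = (if a = i \<and> 3 = j then 1 else 0) + xc i j (R (Suc n) @ [3])"
  using xc_append[of i j "[a]" "R (Suc n) @ [3]"] by (simp del: R.simps)

lemma adj_Cons_R3: "adj (a # (R (Suc n) @ [3])) \<longleftrightarrow> a \<noteq> 3"
  using adj_append[of "[a]" "R (Suc n) @ [3]"] adj_R3[of n] by (simp del: R.simps)

lemma set_R3: "set (R n @ [3]) \<subseteq> {1,2,3}" using R_set by auto


definition "w0 m = R (Suc (Suc m))"
definition "w1 m = [2,1,2] @ R (Suc m)"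
definition "w2 m = [2,3,1] @ R (Suc m)"
definition "w3 m = [2,3,2] @ R (Suc m)"
definition "w4 m = [2,1] @ (R (Suc m) @ [3])"
definition "w5 m = [1,2,1] @ R (Suc m)"

lemma words_Omega:
  assumes "2 * k = Suc m"
  shows "w0 m \<in> Omega (6*k+3)" "w1 m \<in> Omega (6*k+3)" "w2 m \<in> Omega (6*k+3)"
        "w3 m \<in> Omega (6*k+3)" "w4 m \<in> Omega (6*k+3)" "w5 m \<in> Omega (6*k+3)"
  unfolding Omega_iff w0_def w1_def w2_def w3_def w4_def w5_def
  using assms R_set[of "Suc m"] R_set[of "Suc (Suc m)"]
  by (simp_all add: adj_Cons_R adj_Cons_R3 del: R.simps)

lemma avec_w:
  shows "avec (w1 m) = avec (w0 m) + vector[1,-1,0,1,0,-1]"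
        "avec (w2 m) = avec (w0 m) + vector[0,0,-1,1,1,-1]"
        "avec (w3 m) = avec (w0 m) + vector[0,-1,-1,2,0,0]"
        "avec (w4 m) = avec (w0 m) + vector[0,1,0,0,0,-1]"
  unfolding avec_xc vec6_def vec_eq_iff forall_6 w0_def w1_def w2_def w3_def w4_def
  by (simp_all add: xc_Cons_R xc_Cons_R3 xc_R3 R_xc del: R.simps)



lemma cval_inner: "cval k w = vec6 (cfun k) \<bullet> avec w"
  unfolding avec_xc vec6_inner cval_def cfun_def by simp

lemma c_vec: "vec6 (cfun k) \<bullet> vector [a,b,c,d,e,f] =
   (5 * real k + 2) * a + (2 * real k + 1) * b + (- 4 * real k - 1) * c + (- real k) * d
   + (- real k) * e + (2 * real k + 1) * f"
  unfolding vec6_def inner_vec_def sum_6 cfun_def by simp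

lemma mm: assumes "2 * k = Suc m" shows "real m = 2 * real k - 1"
proof -
  have "real (2*k) = real (Suc m)" using assms by simp
  then show ?thesis by simp
qed

lemma cw0: "cval k (w0 m) = (2 * real k + 1) * (1 + real m) + (- (4 * real k) - 1) * (2 + real m)
     + (2 * real k + 1) * (2 + real m)"
    unfolding cval_def w0_def by (simp add: R_xc del: R.simps)

lemma cw5: "cval k (w5 m) = (5 * real k + 2) + (2 * real k + 1) * (1 + real m) + (- (4 * real k) - 1) * (2 + real m)
     + (2 * real k + 1) * (1 + real m)"
    unfolding cval_def w5_def by (simp add: xc_Cons_R R_xc del: R.simps)

lemma cval_w:
  assumes "2 * k = Suc m"
  shows "cval k (w0 m) = 0" "cval k (w1 m) = 0" "cval k (w2 m) = 0" "cval k (w3 m) = 0"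
    "cval k (w4 m) = 0" "cval k (w5 m) > 0"
proof -
  note M = mm[OF assms]
  show z: "cval k (w0 m) = 0" unfolding cw0 M by (simp add: algebra_simps)
  have z': "vec6 (cfun k) \<bullet> avec (w0 m) = 0" using z by (simp add: cval_inner)
  show "cval k (w1 m) = 0" "cval k (w2 m) = 0" "cval k (w3 m) = 0" "cval k (w4 m) = 0"
    unfolding cval_inner avec_w inner_add_right c_vec z' by (simp_all add: algebra_simps)
  show "cval k (w5 m) > 0" unfolding cw5 M by (simp add: algebra_simps)
qed


lemma perm_cases:
  assumes "\<sigma> permutes {1,2,3::nat}"
  shows "(\<sigma> 1 = 1 \<and> \<sigma> 2 = 2 \<and> \<sigma> 3 = 3) \<or> (\<sigma> 1 = 1 \<and> \<sigma> 2 = 3 \<and> \<sigma> 3 = 2) \<or>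
         (\<sigma> 1 = 2 \<and> \<sigma> 2 = 1 \<and> \<sigma> 3 = 3) \<or> (\<sigma> 1 = 2 \<and> \<sigma> 2 = 3 \<and> \<sigma> 3 = 1) \<or>
         (\<sigma> 1 = 3 \<and> \<sigma> 2 = 1 \<and> \<sigma> 3 = 2) \<or> (\<sigma> 1 = 3 \<and> \<sigma> 2 = 2 \<and> \<sigma> 3 = 1)"
proof -
  have i: "\<sigma> 1 = 1 \<or> \<sigma> 1 = 2 \<or> \<sigma> 1 = 3" "\<sigma> 2 = 1 \<or> \<sigma> 2 = 2 \<or> \<sigma> 2 = 3"
     "\<sigma> 3 = 1 \<or> \<sigma> 3 = 2 \<or> \<sigma> 3 = 3"
    using permutes_in_image[OF assms] by blast+
  have "inj \<sigma>" using assms permutes_inj by blast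
  then have d: "\<sigma> 1 \<noteq> \<sigma> 2" "\<sigma> 1 \<noteq> \<sigma> 3" "\<sigma> 2 \<noteq> \<sigma> 3"
    using injD[of \<sigma> 1 2] injD[of \<sigma> 1 3] injD[of \<sigma> 2 3] by auto
  show ?thesis using i(1) i(2) i(3) d by (elim disjE; simp)
qed

lemma perm_inv_cases:
  assumes "\<sigma> permutes {1,2,3::nat}"
  shows "(\<sigma> 1 = 1 \<and> \<sigma> 2 = 2 \<and> \<sigma> 3 = 3 \<and> inv \<sigma> 1 = 1 \<and> inv \<sigma> 2 = 2 \<and> inv \<sigma> 3 = 3) \<or>
         (\<sigma> 1 = 1 \<and> \<sigma> 2 = 3 \<and> \<sigma> 3 = 2 \<and> inv \<sigma> 1 = 1 \<and> inv \<sigma> 3 = 2 \<and> inv \<sigma> 2 = 3) \<or>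
         (\<sigma> 1 = 2 \<and> \<sigma> 2 = 1 \<and> \<sigma> 3 = 3 \<and> inv \<sigma> 2 = 1 \<and> inv \<sigma> 1 = 2 \<and> inv \<sigma> 3 = 3) \<or>
         (\<sigma> 1 = 2 \<and> \<sigma> 2 = 3 \<and> \<sigma> 3 = 1 \<and> inv \<sigma> 2 = 1 \<and> inv \<sigma> 3 = 2 \<and> inv \<sigma> 1 = 3) \<or>
         (\<sigma> 1 = 3 \<and> \<sigma> 2 = 1 \<and> \<sigma> 3 = 2 \<and> inv \<sigma> 3 = 1 \<and> inv \<sigma> 1 = 2 \<and> inv \<sigma> 2 = 3) \<or>
         (\<sigma> 1 = 3 \<and> \<sigma> 2 = 2 \<and> \<sigma> 3 = 1 \<and> inv \<sigma> 3 = 1 \<and> inv \<sigma> 2 = 2 \<and> inv \<sigma> 1 = 3)"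
proof -
  have iv: "inv \<sigma> (\<sigma> x) = x" for x using permutes_inverses(2)[OF assms] by blast
  have a: "inv \<sigma> (\<sigma> 1) = 1" "inv \<sigma> (\<sigma> 2) = 2" "inv \<sigma> (\<sigma> 3) = 3" using iv by auto
  from perm_cases[OF assms] show ?thesis
  proof (elim disjE conjE)
    assume h: "\<sigma> 1 = 1" "\<sigma> 2 = 2" "\<sigma> 3 = 3" then show ?thesis using a by (simp only: h) simp
  next
    assume h: "\<sigma> 1 = 1" "\<sigma> 2 = 3" "\<sigma> 3 = 2" then show ?thesis using a by (simp only: h) simp
  next
    assume h: "\<sigma> 1 = 2" "\<sigma> 2 = 1" "\<sigma> 3 = 3" then show ?thesis using a by (simp only: h) simp
  next
    assume h: "\<sigma> 1 = 2" "\<sigma> 2 = 3" "\<sigma> 3 = 1" then show ?thesis using a by (simp only: h) simp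
  next
    assume h: "\<sigma> 1 = 3" "\<sigma> 2 = 1" "\<sigma> 3 = 2" then show ?thesis using a by (simp only: h) simp
  next
    assume h: "\<sigma> 1 = 3" "\<sigma> 2 = 2" "\<sigma> 3 = 1" then show ?thesis using a by (simp only: h) simp
  qed
qed

definition comp6 :: "real^6 \<Rightarrow> nat \<Rightarrow> nat \<Rightarrow> real" where
  "comp6 x i j = (if i = 1 \<and> j = 2 then x$1 else if i = 1 \<and> j = 3 then x$2
     else if i = 2 \<and> j = 1 then x$3 else if i = 2 \<and> j = 3 then x$4
     else if i = 3 \<and> j = 1 then x$5 else if i = 3 \<and> j = 2 then x$6 else 0)"

definition Lmap :: "(nat \<Rightarrow> nat) \<Rightarrow> real^6 \<Rightarrow> real^6" where
  "Lmap \<tau> x = vec6 (\<lambda>i j. comp6 x (inv \<tau> i) (inv \<tau> j))"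

lemma comp6_vec6: "comp6 (vec6 f) 1 2 = f 1 2" "comp6 (vec6 f) 1 3 = f 1 3"
  "comp6 (vec6 f) 2 1 = f 2 1" "comp6 (vec6 f) 2 3 = f 2 3" "comp6 (vec6 f) 3 1 = f 3 1"
  "comp6 (vec6 f) 3 2 = f 3 2"
  by (simp_all add: comp6_def vec6_def)

lemma Lmap_linear: "linear (Lmap \<tau>)"
proof (rule linearI)
  fix x y :: "real^6" and r :: real
  show "Lmap \<tau> (x + y) = Lmap \<tau> x + Lmap \<tau> y"
    unfolding Lmap_def vec6_add by (rule arg_cong[where f=vec6]) (simp add: comp6_def fun_eq_iff)
  show "Lmap \<tau> (r *\<^sub>R x) = r *\<^sub>R Lmap \<tau> x"
    unfolding Lmap_def vec6_scale by (rule arg_cong[where f=vec6]) (simp add: comp6_def fun_eq_iff)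
qed

lemma Lmap_inj: assumes "\<tau> permutes {1,2,3}" shows "inj (Lmap \<tau>)"
proof (rule injI)
  fix x y assume "Lmap \<tau> x = Lmap \<tau> y"
  then have e: "comp6 x (inv \<tau> i) (inv \<tau> j) = comp6 y (inv \<tau> i) (inv \<tau> j)"
    if "(i,j) \<in> {(1,2),(1,3),(2,1),(2,3),(3,1),(3,2)}" for i j
    using that unfolding Lmap_def vec6_eq by auto
  have p: "inv \<tau> permutes {1,2,3}" using assms permutes_inv by blast
  have "x$1 = y$1 \<and> x$2 = y$2 \<and> x$3 = y$3 \<and> x$4 = y$4 \<and> x$5 = y$5 \<and> x$6 = y$6"
    using perm_cases[OF p] e[of 1 2] e[of 1 3] e[of 2 1] e[of 2 3] e[of 3 1] e[of 3 2]
    by (elim disjE conjE; simp add: comp6_def)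
  then show "x = y" unfolding vec_eq_iff forall_6 by simp
qed

lemma xc_map_inv: assumes "\<tau> permutes {1,2,3}"
  shows "xc i j (map \<tau> w) = xc (inv \<tau> i) (inv \<tau> j) w"
proof -
  have "inj \<tau>" using assms permutes_inj by blast
  have "xc i j (map \<tau> w) = xc (\<tau> (inv \<tau> i)) (\<tau> (inv \<tau> j)) (map \<tau> w)"
    using permutes_inverses(1)[OF assms] by simp
  also have "\<dots> = xc (inv \<tau> i) (inv \<tau> j) w" by (rule xc_map[OF \<open>inj \<tau>\<close>])
  finally show ?thesis .
qed


lemma avec_map: assumes "\<tau> permutes {1,2,3}"
  shows "avec (map \<tau> w) = Lmap \<tau> (avec w)"
  unfolding avec_xc Lmap_def vec6_eq xc_map_inv[OF assms]
  using perm_inv_cases[OF assms] by (elim disjE conjE; simp add: comp6_def vec6_def)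

lemma Omega_map: assumes "\<tau> permutes {1,2,3}" "v \<in> Omega T" shows "map \<tau> v \<in> Omega T"
proof -
  have "inj \<tau>" using assms permutes_inj by blast
  have "set (map \<tau> v) \<subseteq> {1,2,3}" using assms(2) permutes_image[OF assms(1)]
    by (auto simp: Omega_iff)
  then show ?thesis using assms(2) adj_map[OF \<open>inj \<tau>\<close>] by (auto simp: Omega_iff)
qed

lemma act_val: assumes "\<sigma> permutes {1,2,3}"
  shows "act \<sigma> (cfun k) \<bullet> avec v = cval k (map \<sigma> v)"
  unfolding act_def avec_xc vec6_inner cval_def xc_map_inv[OF assms]
  using perm_inv_cases[OF assms] by (elim disjE conjE; simp add: cfun_def algebra_simps)



lemma indep4: "independent {vector[1,-1,0,1,0,-1], vector[0,0,-1,1,1,-1], vector[0,-1,-1,2,0,0], vector[0,1,0,0,0,-1] :: real^6}"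
  (is "independent {?a,?b,?c,?d}")
proof -
  have ne: "?a \<noteq> ?b" "?a \<noteq> ?c" "?a \<noteq> ?d" "?b \<noteq> ?c" "?b \<noteq> ?d" "?c \<noteq> ?d"
    by (simp_all add: vec_eq_iff forall_6)
  show ?thesis
  proof (subst dependent_finite, simp, rule notI, elim exE conjE)
    fix u assume ex: "\<exists>v\<in>{?a,?b,?c,?d}. u v \<noteq> 0" and s: "(\<Sum>v\<in>{?a,?b,?c,?d}. u v *\<^sub>R v) = 0"
    have s2: "u ?a *\<^sub>R ?a + u ?b *\<^sub>R ?b + u ?c *\<^sub>R ?c + u ?d *\<^sub>R ?d = 0"
      using s ne by (simp add: add.assoc)
    then have "\<forall>i. (u ?a *\<^sub>R ?a + u ?b *\<^sub>R ?b + u ?c *\<^sub>R ?c + u ?d *\<^sub>R ?d) $ i = 0"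
      by simp
    then have "u ?a = 0 \<and> u ?b = 0 \<and> u ?c = 0 \<and> u ?d = 0"
      unfolding forall_6 by simp
    then show False using ex by auto
  qed
qed

lemma affA: "aff_dim {avec (w0 m), avec (w1 m), avec (w2 m), avec (w3 m), avec (w4 m)} \<ge> 4"
  (is "aff_dim ?A \<ge> 4")
proof -
  let ?a = "avec (w0 m)"
  let ?D = "{vector[1,-1,0,1,0,-1], vector[0,0,-1,1,1,-1], vector[0,-1,-1,2,0,0], vector[0,1,0,0,0,-1] :: real^6}"
  have "?a \<in> affine hull ?A" by (rule hull_inc) simp
  then have e: "aff_dim ?A = int (dim ((+) (- ?a) ` ?A))" by (rule aff_dim_eq_dim)
  have im: "(+) (- ?a) ` ?A = insert 0 ?D" unfolding avec_w by (simp add: add.assoc[symmetric])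
  have c: "card ?D = 4" by (simp add: vec_eq_iff forall_6)
  have "card ?D \<le> dim (insert 0 ?D)"
    by (rule independent_card_le_dim[OF _ indep4]) auto
  then show ?thesis unfolding e im c by simp
qed

lemma one_val: assumes "v \<in> Omega T" "T \<ge> 1"
  shows "vec6 (\<lambda>i j. 1) \<bullet> avec v = real T - 1"
proof -
  have L: "length v = T" "set v \<subseteq> {1,2,3}" "adj v" using assms(1) by (auto simp: Omega_iff)
  then have "v \<noteq> []" using assms(2) by auto
  from invariants[OF this L(2,3)] L(1)
  have "xc 1 2 v + xc 1 3 v + xc 2 1 v + xc 2 3 v + xc 3 1 v + xc 3 2 v + 1 = T" by simp
  then have "real (xc 1 2 v + xc 1 3 v + xc 2 1 v + xc 2 3 v + xc 3 1 v + xc 3 2 v + 1) = real T" by simp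
  then show ?thesis unfolding avec_xc vec6_inner by simp
qed

lemma aff_PT: assumes "T \<ge> 1" shows "aff_dim (PT T) \<le> 5"
proof -
  have "PT T \<subseteq> {x. vec6 (\<lambda>i j. 1) \<bullet> x = real T - 1}"
    unfolding PT_def by (rule hull_minimal) (use one_val[OF _ assms] in \<open>auto simp: convex_hyperplane\<close>)
  then have "aff_dim (PT T) \<le> aff_dim {x. vec6 (\<lambda>i j. 1) \<bullet> x = real T - 1}" by (rule aff_dim_subset)
  also have "\<dots> = 5"
  proof -
    have "vec6 (\<lambda>i j. 1) \<noteq> 0" unfolding vec6_zero vec6_eq by simp
    then show ?thesis by simp
  qed
  finally show ?thesis .
qed

theorem proposition11:
  fixes k T :: nat and \<sigma> :: "nat \<Rightarrow> nat"
  assumes "k \<ge> 1" and "T = 6 * k + 3" and "\<sigma> permutes {1,2,3}"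
  shows "defines_facet T (act \<sigma> (cfun k))"
proof -
  define m where "m = 2 * k - 1"
  have m: "2 * k = Suc m" using assms(1) unfolding m_def by simp
  define \<tau> where "\<tau> = inv \<sigma>"
  have tp: "\<tau> permutes {1,2,3}" unfolding \<tau>_def using permutes_inv assms(3) by blast
  have st: "map \<sigma> (map \<tau> w) = w" for w
    unfolding \<tau>_def using permutes_inverses(1)[OF assms(3)] by (simp add: map_idI)
  define c where "c = act \<sigma> (cfun k)"
  have val: "c \<bullet> avec v = cval k (map \<sigma> v)" for v unfolding c_def by (rule act_val[OF assms(3)])
  have nonneg: "\<forall>w\<in>Omega T. c \<bullet> avec w \<ge> 0"
    using val cval_nonneg Omega_map[OF assms(3)] assms(2) by auto
  have PTge: "PT T \<subseteq> {x. c \<bullet> x \<ge> 0}"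
    unfolding PT_def by (rule hull_minimal) (use nonneg in \<open>auto simp: convex_halfspace_ge\<close>)
  define F where "F = {x \<in> PT T. c \<bullet> x = 0}"
  have Feq: "F = PT T \<inter> {x. c \<bullet> x = 0}" unfolding F_def by auto
  have face: "F face_of PT T"
    unfolding Feq by (rule face_of_Int_supporting_hyperplane_ge) (use PTge in \<open>auto simp: PT_def\<close>)
  have Om: "w0 m \<in> Omega T" "w1 m \<in> Omega T" "w2 m \<in> Omega T" "w3 m \<in> Omega T" "w4 m \<in> Omega T"
      "w5 m \<in> Omega T"
    using words_Omega[OF m] assms(2) by auto
  have inPT: "avec (map \<tau> w) \<in> PT T" if "w \<in> Omega T" for w
    unfolding PT_def by (rule hull_inc) (use Omega_map[OF tp that] in auto)
  have cv: "c \<bullet> avec (map \<tau> w) = cval k w" for w using val st by simp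
  have inF: "avec (map \<tau> w) \<in> F" if "w \<in> Omega T" "cval k w = 0" for w
    unfolding F_def using inPT[OF that(1)] cv that(2) by simp
  have q5: "avec (map \<tau> (w5 m)) \<in> PT T" "avec (map \<tau> (w5 m)) \<notin> F"
    using inPT[OF Om(6)] cv cval_w(6)[OF m] unfolding F_def by auto
  have Fne: "F \<noteq> {}" using inF[OF Om(1) cval_w(1)[OF m]] by auto
  have FnP: "F \<noteq> PT T" using q5 by auto
  have lt: "aff_dim F < aff_dim (PT T)"
    by (rule face_of_aff_dim_lt) (use face FnP in \<open>auto simp: PT_def\<close>)
  let ?A = "{avec (w0 m), avec (w1 m), avec (w2 m), avec (w3 m), avec (w4 m)}"
  have sub: "Lmap \<tau> ` ?A \<subseteq> F"
    using inF[OF Om(1) cval_w(1)[OF m]] inF[OF Om(2) cval_w(2)[OF m]] inF[OF Om(3) cval_w(3)[OF m]]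
      inF[OF Om(4) cval_w(4)[OF m]] inF[OF Om(5) cval_w(5)[OF m]]
    by (simp add: avec_map[OF tp, symmetric])
  have "aff_dim (Lmap \<tau> ` ?A) = aff_dim ?A"
    by (rule aff_dim_injective_linear_image[OF Lmap_linear Lmap_inj[OF tp]])
  then have ge: "aff_dim F \<ge> 4" using aff_dim_subset[OF sub] affA[of m] by linarith
  have le: "aff_dim (PT T) \<le> 5" using aff_PT assms(2) by simp
  have "aff_dim F = aff_dim (PT T) - 1" using lt ge le by linarith
  then show ?thesis
    unfolding defines_facet_def facet_of_def c_def[symmetric] F_def[symmetric]
    using nonneg face Fne by simp
qed


end
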